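(* Let $G=(V,S,\sigma,w,\theta,\pi)$ be a restaking network with $\theta(s)>0$ for all $s\in S$. Suppose that for every validator $v\in V$ $$\sum_{s\in S}\frac{w(v,s)}{\sum_{v'\in V}w(v',s)}\cdot\frac{\pi(s)}{\theta(s)}<\sigma(v),$$ and for every service $s\in S$ $$\sum_{v\in V}w(v,s)>\frac{\pi(s)}{\theta(s)}.$$ Then there is no profitable attack in $G$ (equivalently, $G$ is cryptoeconomically secure).
   Context: A restaking network is a tuple $G=(V,S,\sigma,w,\theta,\pi)$ with finite nonempty validator set $V$, finite service set $S$, stake $\sigma:V\to\mathbb{R}_{>0}$, allocation $w:V\times S\to\mathbb{R}_{\ge0}$ with $w(v,s)\le\sigma(v)$, thresholds $\theta:S\to[0,1]$ and prizes $\pi:S\to\mathbb{R}_{>0}$. An attack is $\alpha:V\times S\to\mathbb{R}_{\ge0}$ with $\alpha(v,s)\le w(v,s)$. Attacked services: $S_\alpha=\{s:\sum_v\alpha(v,s)\ge\theta(s)\sum_v w(v,s)\}$. Validator cost $c_v(\alpha)=\min(\sigma(v),\sum_{s\in S_\alpha}\alpha(v,s))$, total cost $C(\alpha)=\sum_v c_v(\alpha)$, prize $\Pi(\alpha)=\sum_{s\in S_\alpha}\pi(s)$. The attack is profitable if $S_\alpha\ne\emptyset$ and $C(\alpha)\le\Pi(\alpha)$. (A network is cryptoeconomically secure iff no profitable attack exists.) *)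

theory Defs
  imports Complex_Main
begin

definition restaking_network ::
  "'v set \<Rightarrow> 's set \<Rightarrow> ('v \<Rightarrow> real) \<Rightarrow> ('v \<Rightarrow> 's \<Rightarrow> real) \<Rightarrow> ('s \<Rightarrow> real) \<Rightarrow> ('s \<Rightarrow> real) \<Rightarrow> bool"
where
  "restaking_network V S \<sigma> w \<theta> \<pi> \<longleftrightarrow>
     finite V \<and> V \<noteq> {} \<and> finite S \<and>
     (\<forall>v\<in>V. \<sigma> v > 0) \<and>
     (\<forall>v\<in>V. \<forall>s\<in>S. 0 \<le> w v s \<and> w v s \<le> \<sigma> v) \<and>
     (\<forall>s\<in>S. 0 \<le> \<theta> s \<and> \<theta> s \<le> 1) \<and>
     (\<forall>s\<in>S. \<pi> s > 0)"

definition is_attack ::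
  "'v set \<Rightarrow> 's set \<Rightarrow> ('v \<Rightarrow> 's \<Rightarrow> real) \<Rightarrow> ('v \<Rightarrow> 's \<Rightarrow> real) \<Rightarrow> bool"
where
  "is_attack V S w \<alpha> \<longleftrightarrow> (\<forall>v\<in>V. \<forall>s\<in>S. 0 \<le> \<alpha> v s \<and> \<alpha> v s \<le> w v s)"

definition attacked_services ::
  "'v set \<Rightarrow> 's set \<Rightarrow> ('v \<Rightarrow> 's \<Rightarrow> real) \<Rightarrow> ('s \<Rightarrow> real) \<Rightarrow> ('v \<Rightarrow> 's \<Rightarrow> real) \<Rightarrow> 's set"
where
  "attacked_services V S w \<theta> \<alpha> =
     {s\<in>S. (\<Sum>v\<in>V. \<alpha> v s) \<ge> \<theta> s * (\<Sum>v\<in>V. w v s)}"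

definition attack_cost ::
  "'v set \<Rightarrow> 's set \<Rightarrow> ('v \<Rightarrow> real) \<Rightarrow> ('v \<Rightarrow> 's \<Rightarrow> real) \<Rightarrow> ('s \<Rightarrow> real) \<Rightarrow> ('v \<Rightarrow> 's \<Rightarrow> real) \<Rightarrow> real"
where
  "attack_cost V S \<sigma> w \<theta> \<alpha> =
     (\<Sum>v\<in>V. min (\<sigma> v) (\<Sum>s\<in>attacked_services V S w \<theta> \<alpha>. \<alpha> v s))"

definition attack_prize ::
  "'v set \<Rightarrow> 's set \<Rightarrow> ('v \<Rightarrow> 's \<Rightarrow> real) \<Rightarrow> ('s \<Rightarrow> real) \<Rightarrow> ('s \<Rightarrow> real) \<Rightarrow> ('v \<Rightarrow> 's \<Rightarrow> real) \<Rightarrow> real"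
where
  "attack_prize V S w \<theta> \<pi> \<alpha> = (\<Sum>s\<in>attacked_services V S w \<theta> \<alpha>. \<pi> s)"

definition profitable_attack ::
  "'v set \<Rightarrow> 's set \<Rightarrow> ('v \<Rightarrow> real) \<Rightarrow> ('v \<Rightarrow> 's \<Rightarrow> real) \<Rightarrow> ('s \<Rightarrow> real) \<Rightarrow> ('s \<Rightarrow> real) \<Rightarrow> ('v \<Rightarrow> 's \<Rightarrow> real) \<Rightarrow> bool"
where
  "profitable_attack V S \<sigma> w \<theta> \<pi> \<alpha> \<longleftrightarrow>
     is_attack V S w \<alpha> \<and>
     attacked_services V S w \<theta> \<alpha> \<noteq> {} \<and>
     attack_cost V S \<sigma> w \<theta> \<alpha> \<le> attack_prize V S w \<theta> \<pi> \<alpha>"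

end

theory Submission
  imports Defs
begin

theorem mainTheorem4:
  fixes V :: "'v set" and S :: "'s set"
    and \<sigma> :: "'v \<Rightarrow> real" and w :: "'v \<Rightarrow> 's \<Rightarrow> real"
    and \<theta> :: "'s \<Rightarrow> real" and \<pi> :: "'s \<Rightarrow> real"
  assumes "restaking_network V S \<sigma> w \<theta> \<pi>"
    and "\<forall>s\<in>S. \<theta> s > 0"
    and "\<forall>v\<in>V. (\<Sum>s\<in>S. (w v s / (\<Sum>v'\<in>V. w v' s)) * (\<pi> s / \<theta> s)) < \<sigma> v"
    and "\<forall>s\<in>S. (\<Sum>v\<in>V. w v s) > \<pi> s / \<theta> s"
  shows "\<not> (\<exists>\<alpha>. profitable_attack V S \<sigma> w \<theta> \<pi> \<alpha>)"
proof
  assume "\<exists>\<alpha>. profitable_attack V S \<sigma> w \<theta> \<pi> \<alpha>"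
  then obtain \<alpha> where P: "profitable_attack V S \<sigma> w \<theta> \<pi> \<alpha>" by blast
  have net: "finite V" "finite S" "\<And>v. v\<in>V \<Longrightarrow> \<sigma> v > 0"
    "\<And>v s. v\<in>V \<Longrightarrow> s\<in>S \<Longrightarrow> 0 \<le> w v s"
    "\<And>s. s\<in>S \<Longrightarrow> \<pi> s > 0"
    using assms(1) unfolding restaking_network_def by auto
  have th: "\<And>s. s\<in>S \<Longrightarrow> \<theta> s > 0" using assms(2) by auto
  define W where "W s = (\<Sum>v\<in>V. w v s)" for s
  have Wgt: "\<And>s. s\<in>S \<Longrightarrow> W s > \<pi> s / \<theta> s" using assms(4) W_def by auto
  have Wpos: "\<And>s. s\<in>S \<Longrightarrow> W s > 0"
    using Wgt net(5) th by (meson divide_pos_pos less_trans)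
  have att: "\<And>v s. v\<in>V \<Longrightarrow> s\<in>S \<Longrightarrow> 0 \<le> \<alpha> v s \<and> \<alpha> v s \<le> w v s"
    using P unfolding profitable_attack_def is_attack_def by auto
  define A where "A = attacked_services V S w \<theta> \<alpha>"
  have AS: "A \<subseteq> S" and finA: "finite A" using net(2) unfolding A_def attacked_services_def by auto
  have Ane: "A \<noteq> {}" using P unfolding A_def profitable_attack_def by auto
  have Ath: "\<And>s. s\<in>A \<Longrightarrow> (\<Sum>v\<in>V. \<alpha> v s) \<ge> \<theta> s * W s"
    unfolding A_def attacked_services_def W_def by auto
  have le: "attack_cost V S \<sigma> w \<theta> \<alpha> \<le> attack_prize V S w \<theta> \<pi> \<alpha>"
    using P unfolding profitable_attack_def by auto
  define c where "c s = \<pi> s / (\<theta> s * W s)" for s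
  have c0: "\<And>s. s\<in>S \<Longrightarrow> 0 < c s" unfolding c_def using net(5) th Wpos by auto
  have c1: "\<And>s. s\<in>S \<Longrightarrow> c s < 1"
  proof -
    fix s assume s: "s\<in>S"
    have "\<pi> s < \<theta> s * W s" using Wgt[OF s] th[OF s] by (simp add: divide_less_eq mult.commute)
    thus "c s < 1" unfolding c_def using th[OF s] Wpos[OF s] by simp
  qed
  define a where "a v = (\<Sum>s\<in>A. \<alpha> v s)" for v
  define t where "t v = (\<Sum>s\<in>A. \<alpha> v s * c s)" for v
  have t_sigma: "t v < \<sigma> v" if v: "v\<in>V" for v
  proof -
    have "t v \<le> (\<Sum>s\<in>A. (w v s / W s) * (\<pi> s / \<theta> s))"
      unfolding t_def
    proof (rule sum_mono)
      fix s assume s: "s\<in>A"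
      hence sS: "s\<in>S" using AS by auto
      have "\<alpha> v s * c s \<le> w v s * c s"
        using att[OF v sS] c0[OF sS] by (simp add: mult_right_mono)
      also have "\<dots> = (w v s / W s) * (\<pi> s / \<theta> s)" unfolding c_def by simp
      finally show "\<alpha> v s * c s \<le> (w v s / W s) * (\<pi> s / \<theta> s)" .
    qed
    also have "\<dots> \<le> (\<Sum>s\<in>S. (w v s / W s) * (\<pi> s / \<theta> s))"
      apply (rule sum_mono2[OF net(2) AS])
      using net(4)[OF v] Wpos net(5) th by (simp add: less_imp_le)
    also have "\<dots> < \<sigma> v" using assms(3) v unfolding W_def by auto
    finally show ?thesis .
  qed
  have t_a: "t v \<le> a v" if v: "v\<in>V" for v
    unfolding t_def a_def
  proof (rule sum_mono)
    fix s assume s: "s\<in>A"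
    hence sS: "s\<in>S" using AS by auto
    show "\<alpha> v s * c s \<le> \<alpha> v s"
      using att[OF v sS] c1[OF sS] by (simp add: mult_left_le)
  qed
  have t_a_strict: "t v < a v" if v: "v\<in>V" and s: "s\<in>A" and pos: "\<alpha> v s > 0" for v s
    unfolding t_def a_def
  proof (rule sum_strict_mono_ex1[OF finA])
    show "\<forall>x\<in>A. \<alpha> v x * c x \<le> \<alpha> v x"
    proof
      fix x assume "x\<in>A" hence xS: "x\<in>S" using AS by auto
      show "\<alpha> v x * c x \<le> \<alpha> v x" using att[OF v xS] c1[OF xS] by (simp add: mult_left_le)
    qed
    have "s\<in>S" using s AS by auto
    then show "\<exists>x\<in>A. \<alpha> v x * c x < \<alpha> v x" using s pos c1 by (intro bexI[of _ s]) auto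
  qed
  obtain s0 where s0: "s0\<in>A" using Ane by auto
  have s0S: "s0\<in>S" using s0 AS by auto
  have "(\<Sum>v\<in>V. \<alpha> v s0) > 0"
    using Ath[OF s0] th[OF s0S] Wpos[OF s0S] by (meson less_le_trans mult_pos_pos)
  then obtain v0 where v0: "v0\<in>V" "\<alpha> v0 s0 > 0"
    by (metis less_irrefl sum_nonpos not_le)
  have "attack_prize V S w \<theta> \<pi> \<alpha> = (\<Sum>s\<in>A. \<pi> s)"
    unfolding attack_prize_def A_def by simp
  also have "\<dots> \<le> (\<Sum>s\<in>A. c s * (\<Sum>v\<in>V. \<alpha> v s))"
  proof (rule sum_mono)
    fix s assume s: "s\<in>A"
    hence sS: "s\<in>S" using AS by auto
    have "\<pi> s = c s * (\<theta> s * W s)" unfolding c_def using th[OF sS] Wpos[OF sS] by simp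
    also have "\<dots> \<le> c s * (\<Sum>v\<in>V. \<alpha> v s)"
      using Ath[OF s] c0[OF sS] by (simp add: mult_left_mono)
    finally show "\<pi> s \<le> c s * (\<Sum>v\<in>V. \<alpha> v s)" .
  qed
  also have "\<dots> = (\<Sum>v\<in>V. t v)"
    unfolding t_def by (simp add: sum_distrib_left mult.commute sum.swap[of _ A])
  also have "\<dots> < (\<Sum>v\<in>V. min (\<sigma> v) (a v))"
  proof (rule sum_strict_mono_ex1[OF net(1)])
    show "\<forall>x\<in>V. t x \<le> min (\<sigma> x) (a x)" using t_sigma t_a by (simp add: less_imp_le)
    show "\<exists>x\<in>V. t x < min (\<sigma> x) (a x)"
      using v0 t_sigma t_a_strict[OF v0(1) s0 v0(2)] by auto
  qed
  also have "\<dots> = attack_cost V S \<sigma> w \<theta> \<alpha>"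
    unfolding attack_cost_def a_def A_def by simp
  finally show False using le by simp
qed

end
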